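(* Let $q$ be a positive integer and let $f(r)=\frac{4}{\pi^2}\sum_{k\ge0}\frac{\sec((2k+1)\pi r)}{(2k+1)^2}$. Then \[ f(1/q)=\begin{cases}1/2 & \text{if } q\equiv 0 \pmod 4,\\ 1/2-1/q & \text{if } q\equiv 1 \pmod 4,\\ \infty & \text{if } q\equiv 2 \pmod 4,\\ 1/2+1/q & \text{if } q\equiv 3 \pmod 4,\end{cases} \] where the value $\infty$ means that $1/q$ is a singularity of $f$.
   Context: The function $f$ is defined by the series $f(r)=\frac{4}{\pi^2}\sum_{k\ge0}\frac{\sec((2k+1)\pi r)}{(2k+1)^2}$, with $\sec x=1/\cos x$. Equivalently $f(r)=\tfrac12(\psi(r)-\psi(r+1))$ where $\psi(r)=\frac{4}{\pi^2}\sum_{n\ge1}\frac{\sec(n\pi r)}{n^2}$. The function $f$ is even and satisfies $f(r+1)=-f(r)$. *)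

theory Defs
  imports "HOL-Analysis.Analysis"
begin

definition sec :: "real \<Rightarrow> real" where
  "sec x = 1 / cos x"

definition f_term :: "real \<Rightarrow> nat \<Rightarrow> real" where
  "f_term r k = 4 / pi\<^sup>2 * (sec ((2 * real k + 1) * pi * r) / (2 * real k + 1)\<^sup>2)"

text \<open>r is a singularity of f: some term of the series has cos = 0, i.e. sec = infinity.\<close>
definition f_singular :: "real \<Rightarrow> bool" where
  "f_singular r \<longleftrightarrow> (\<exists>k::nat. cos ((2 * real k + 1) * pi * r) = 0)"

end

theory Submission
  imports Defs
begin

lemma Gamma_refl_real:
  fixes x :: real assumes "x \<notin> \<int>"
  shows "Gamma x * Gamma (1 - x) = pi / sin (pi * x)"
proof -
  have "Gamma (complex_of_real x) * Gamma (1 - complex_of_real x) = of_real pi / sin (of_real pi * of_real x)"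
    by (rule Gamma_reflection_complex)
  also have "Gamma (complex_of_real x) * Gamma (1 - complex_of_real x) = of_real (Gamma x * Gamma (1 - x))"
    by (metis Gamma_complex_of_real of_real_1 of_real_diff of_real_mult)
  also have "of_real pi / sin (of_real pi * of_real x) = (of_real (pi / sin (pi * x)) :: complex)"
    by (metis of_real_divide of_real_mult sin_of_real)
  finally show ?thesis using of_real_eq_iff by blast
qed

lemma Digamma_refl_real:
  fixes x :: real assumes x: "0 < x" "x < 1"
  shows "Digamma (1 - x) - Digamma x = pi * cos (pi * x) / sin (pi * x)"
proof -
  have nI: "y \<notin> \<int>" if "0 < y" "y < 1" for y :: real
  proof
    assume "y \<in> \<int>" then obtain n where "y = of_int n" by (auto elim: Ints_cases)
    with that show False by simp
  qed
  have nP: "y \<notin> \<int>\<^sub>\<le>\<^sub>0" if "0 < y" for y :: real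
    using that nonpos_Ints_nonpos not_le by blast
  have sinpos: "sin (pi * y) > 0" if "0 < y" "y < 1" for y :: real
    using that by (intro sin_gt_zero) auto
  have eq: "\<forall>y\<in>{0<..<1::real}. pi = Gamma y * Gamma (1 - y) * sin (pi * y)"
  proof
    fix y :: real assume "y \<in> {0<..<1}"
    then have "0 < y" "y < 1" by auto
    from Gamma_refl_real[OF nI[OF this]] sinpos[OF this] show "pi = Gamma y * Gamma (1 - y) * sin (pi * y)"
      by (simp add: field_simps)
  qed
  have d: "((\<lambda>y. Gamma y * Gamma (1 - y) * sin (pi * y)) has_field_derivative
      (Gamma x * Digamma x * Gamma (1 - x) * sin (pi * x) - Gamma x * (Gamma (1 - x) * Digamma (1 - x)) * sin (pi * x)
       + Gamma x * Gamma (1 - x) * (pi * cos (pi * x)))) (at x)"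
    using x nP by (auto intro!: derivative_eq_intros simp: algebra_simps)
  have d0: "((\<lambda>y. Gamma y * Gamma (1 - y) * sin (pi * y)) has_field_derivative 0) (at x)"
    by (rule has_field_derivative_transform_within_open[OF DERIV_const[of pi], of "{0<..<1}"]) (use x eq in auto)
  from DERIV_unique[OF d d0]
  have "Gamma x * Gamma (1 - x) * ((Digamma x - Digamma (1 - x)) * sin (pi * x) + pi * cos (pi * x)) = 0"
    by (simp add: algebra_simps)
  moreover have "Gamma x > 0" "Gamma (1 - x) > 0" using x by simp_all
  ultimately have "(Digamma x - Digamma (1 - x)) * sin (pi * x) + pi * cos (pi * x) = 0" by simp
  then show ?thesis using sinpos[OF x] by (simp add: field_simps)
qed

lemma Polygamma_refl_real:
  fixes x :: real assumes x: "0 < x" "x < 1"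
  shows "Polygamma 1 x + Polygamma 1 (1 - x) = pi\<^sup>2 / (sin (pi * x))\<^sup>2"
proof -
  have nP: "y \<notin> \<int>\<^sub>\<le>\<^sub>0" if "0 < y" for y :: real
    using that nonpos_Ints_nonpos not_le by blast
  have sinpos: "sin (pi * y) > 0" if "0 < y" "y < 1" for y :: real
    using that by (intro sin_gt_zero) auto
  have eq: "\<forall>y\<in>{0<..<1::real}. pi * cos (pi * y) / sin (pi * y) = Digamma (1 - y) - Digamma y"
    using Digamma_refl_real by auto
  have d1: "((\<lambda>y. Digamma (1 - y) - Digamma y) has_field_derivative
      (- Polygamma 1 (1 - x) - Polygamma 1 x)) (at x)"
  proof -
    have a: "(Polygamma 0 has_field_derivative Polygamma 1 (1 - x)) (at (1 - x))"
      using has_field_derivative_Polygamma[of "1 - x" 0 UNIV] nP x by simp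
    have b: "(Polygamma 0 has_field_derivative Polygamma 1 x) (at x)"
      using has_field_derivative_Polygamma[of "x" 0 UNIV] nP x by simp
    have c: "((\<lambda>y. 1 - y) has_field_derivative (-1)) (at x)"
      by (auto intro!: derivative_eq_intros)
    from DERIV_chain2[OF a c] b show ?thesis
      by (auto intro!: derivative_eq_intros DERIV_diff)
  qed
  have d2: "((\<lambda>y. pi * cos (pi * y) / sin (pi * y)) has_field_derivative
      (- (pi\<^sup>2 / (sin (pi * x))\<^sup>2))) (at x)"
  proof -
    have s: "sin (pi * x) \<noteq> 0" using sinpos[OF x] by simp
    have "((\<lambda>y. pi * cos (pi * y) / sin (pi * y)) has_field_derivative
      ((pi * (- sin (pi * x) * pi) * sin (pi * x) - pi * cos (pi * x) * (cos (pi * x) * pi)) / (sin (pi * x))\<^sup>2)) (at x)"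
      using s by (auto intro!: derivative_eq_intros simp: power2_eq_square)
    moreover have "(pi * (- sin (pi * x) * pi) * sin (pi * x) - pi * cos (pi * x) * (cos (pi * x) * pi)) / (sin (pi * x))\<^sup>2
       = - (pi\<^sup>2 / (sin (pi * x))\<^sup>2)"
    proof -
      have "pi * (- sin (pi * x) * pi) * sin (pi * x) - pi * cos (pi * x) * (cos (pi * x) * pi)
          = -(pi\<^sup>2) * ((sin (pi*x))\<^sup>2 + (cos (pi*x))\<^sup>2)" by (simp only: power2_eq_square) algebra
      also have "\<dots> = - (pi\<^sup>2)" by (simp only: sin_cos_squared_add mult_1_right)
      finally have num: "pi * (- sin (pi * x) * pi) * sin (pi * x) - pi * cos (pi * x) * (cos (pi * x) * pi) = - (pi\<^sup>2)" .
      show ?thesis unfolding num by (simp only: minus_divide_left)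
    qed
    ultimately show ?thesis by simp
  qed
  have d3: "((\<lambda>y. Digamma (1 - y) - Digamma y) has_field_derivative (- (pi\<^sup>2 / (sin (pi * x))\<^sup>2))) (at x)"
    by (rule has_field_derivative_transform_within_open[OF d2, of "{0<..<1}"]) (use x eq in auto)
  from DERIV_unique[OF d1 d3] show ?thesis by simp
qed

lemma Polygamma1_sums:
  fixes x :: real assumes "0 < x"
  shows "(\<lambda>k. inverse ((x + real k)\<^sup>2)) sums Polygamma 1 x"
  using Polygamma_LIMSEQ[of x 1] assms by (simp add: numeral_2_eq_2)

lemma sums_residues:
  fixes h :: "nat \<Rightarrow> real"
  assumes q: "q > 0" and sm: "summable h" and r: "\<And>b. b < q \<Longrightarrow> (\<lambda>m. h (q*m + b)) sums s b"
  shows "h sums (\<Sum>b<q. s b)"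
proof -
  have "(\<lambda>m. sum h {m*q..<m*q+q}) sums suminf h" using sums_group[OF summable_sums[OF sm] q] .
  moreover have "(\<lambda>m. sum h {m*q..<m*q+q}) = (\<lambda>m. \<Sum>b<q. h (q*m+b))"
  proof
    fix m
    have "sum h {m*q..<m*q+q} = sum h {0+m*q..<q+m*q}" by (simp add: add.commute)
    also have "\<dots> = (\<Sum>b=0..<q. h (b + m*q))" by (rule sum.shift_bounds_nat_ivl)
    finally show "sum h {m*q..<m*q+q} = (\<Sum>b<q. h (q*m+b))"
      by (simp add: atLeast0LessThan add.commute mult.commute)
  qed
  moreover have "(\<lambda>m. \<Sum>b<q. h (q*m+b)) sums (\<Sum>b<q. s b)"
    by (rule sums_sum) (use r in auto)
  ultimately have "suminf h = (\<Sum>b<q. s b)" using sums_unique2 by metis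
  then show ?thesis using summable_sums[OF sm] by simp
qed

lemma main_sum:
  fixes g :: "nat \<Rightarrow> real" and q :: nat
  assumes q: "q > 0"
   and per: "\<And>m a. g (2*q*m + a) = g a"
   and sym: "\<And>b. b < q \<Longrightarrow> g (2*q - (2*b+1)) = g (2*b+1)"
  shows "(\<lambda>k. 4/pi\<^sup>2 * (g (2*k+1) / (2*real k+1)\<^sup>2)) sums
     (1/(2*(real q)\<^sup>2) * (\<Sum>b<q. g (2*b+1) / (sin (pi * ((2*real b+1)/(2*real q))))\<^sup>2))"
proof -
  define h where "h k = 4/pi\<^sup>2 * (g (2*k+1) / (2*real k+1)\<^sup>2)" for k
  define B where "B = (\<Sum>b<q. \<bar>g (2*b+1)\<bar>)"
  define z where "z b = (2*real b+1)/(2*real q)" for b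
  define P where "P x = Polygamma 1 x" for x :: real
  have gmod: "g (2*k+1) = g (2*(k mod q)+1)" for k
  proof -
    define d where "d = k div q"
    define r where "r = k mod q"
    have e: "k = q*d + r" unfolding d_def r_def by simp
    have "2*k+1 = 2*q*d + (2*r+1)"
      unfolding e by (simp add: algebra_simps)
    then show ?thesis using per unfolding r_def by metis
  qed
  have gB: "\<bar>g (2*k+1)\<bar> \<le> B" for k
  proof -
    have "k mod q \<in> {..<q}" using q by simp
    then have "\<bar>g (2*(k mod q)+1)\<bar> \<le> B" unfolding B_def
      by (rule member_le_sum[where f="\<lambda>b. \<bar>g (2*b+1)\<bar>"]) auto
    then show ?thesis using gmod by simp
  qed
  have sm: "summable h"
  proof (rule summable_comparison_test')
    show "summable (\<lambda>k. 4/pi\<^sup>2 * B * (1 / (real k + 1)\<^sup>2))"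
      using inverse_squares_sums by (intro summable_mult) (simp add: sums_iff add.commute)
    fix k :: nat
    have "norm (h k) = 4/pi\<^sup>2 * (\<bar>g (2*k+1)\<bar> / (2*real k+1)\<^sup>2)"
      by (simp add: h_def abs_mult)
    also have "\<dots> \<le> 4/pi\<^sup>2 * (B / (2*real k+1)\<^sup>2)"
      by (intro mult_left_mono divide_right_mono gB) auto
    also have "\<dots> \<le> 4/pi\<^sup>2 * (B / (real k+1)\<^sup>2)"
      using gB[of 0] by (intro mult_left_mono divide_left_mono power_mono) auto
    finally show "norm (h k) \<le> 4/pi\<^sup>2 * B * (1 / (real k + 1)\<^sup>2)" by simp
  qed
  have zpos: "0 < z b" "z b < 1" if "b < q" for b
    using that q by (auto simp: z_def field_simps)
  have res: "(\<lambda>m. h (q*m + b)) sums (g (2*b+1) / (pi\<^sup>2 * (real q)\<^sup>2) * P (z b))" if b: "b < q" for b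
  proof -
    have "(\<lambda>m. g (2*b+1) / (pi\<^sup>2 * (real q)\<^sup>2) * inverse ((z b + real m)\<^sup>2)) sums (g (2*b+1) / (pi\<^sup>2 * (real q)\<^sup>2) * P (z b))"
      unfolding P_def by (intro sums_mult Polygamma1_sums zpos b)
    moreover have "h (q*m + b) = g (2*b+1) / (pi\<^sup>2 * (real q)\<^sup>2) * inverse ((z b + real m)\<^sup>2)" for m
    proof -
      have A: "g (2*(q*m+b)+1) = g (2*b+1)" using per[of m "2*b+1"] by (simp add: algebra_simps)
      have C0: "2 * real (q*m+b) + 1 = 2 * real q * (z b + real m)"
        using q by (simp add: z_def field_simps)
      have C: "(2 * real (q*m+b) + 1)\<^sup>2 = 4*(real q)\<^sup>2 * (z b + real m)\<^sup>2"
        unfolding C0 by (simp add: power_mult_distrib)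
      show ?thesis unfolding h_def A C using q
        by (simp add: field_simps)
    qed
    ultimately show ?thesis by simp
  qed
  have hs: "h sums (\<Sum>b<q. g (2*b+1) / (pi\<^sup>2 * (real q)\<^sup>2) * P (z b))"
    by (rule sums_residues[OF q sm res])
  have refl: "(\<Sum>b<q. g (2*b+1) * P (z b)) = (\<Sum>b<q. g (2*b+1) * P (1 - z b))"
  proof -
    have "(\<Sum>b<q. g (2*b+1) * P (z b)) = (\<Sum>b<q. g (2*(q - Suc b)+1) * P (z (q - Suc b)))"
      by (rule sum.nat_diff_reindex[symmetric])
    also have "\<dots> = (\<Sum>b<q. g (2*b+1) * P (1 - z b))"
    proof (rule sum.cong)
      fix b assume "b \<in> {..<q}"
      then have b: "b < q" by simp
      have "2*(q - Suc b)+1 = 2*q - (2*b+1)" using b by simp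
      then have "g (2*(q - Suc b)+1) = g (2*b+1)" using sym[OF b] by simp
      moreover have "z (q - Suc b) = 1 - z b" using b q by (simp add: z_def of_nat_diff field_simps)
      ultimately show "g (2*(q - Suc b)+1) * P (z (q - Suc b)) = g (2*b+1) * P (1 - z b)" by simp
    qed simp
    finally show ?thesis .
  qed
  have "(\<Sum>b<q. g (2*b+1) / (pi\<^sup>2 * (real q)\<^sup>2) * P (z b)) = 1 / (pi\<^sup>2 * (real q)\<^sup>2) * (\<Sum>b<q. g (2*b+1) * P (z b))"
    by (simp add: sum_distrib_left)
  also have "(\<Sum>b<q. g (2*b+1) * P (z b)) = (1/2) * (\<Sum>b<q. g (2*b+1) * (P (z b) + P (1 - z b)))"
    using refl by (simp add: sum.distrib algebra_simps)
  also have "(\<Sum>b<q. g (2*b+1) * (P (z b) + P (1 - z b))) = pi\<^sup>2 * (\<Sum>b<q. g (2*b+1) / (sin (pi * z b))\<^sup>2)"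
    unfolding sum_distrib_left
  proof (rule sum.cong)
    fix b assume "b \<in> {..<q}"
    then have b: "b < q" by simp
    have "P (z b) + P (1 - z b) = pi\<^sup>2 / (sin (pi * z b))\<^sup>2"
      unfolding P_def by (rule Polygamma_refl_real) (use zpos[OF b] in auto)
    then show "g (2*b+1) * (P (z b) + P (1 - z b)) = pi\<^sup>2 * (g (2*b+1) / (sin (pi * z b))\<^sup>2)"
      by simp
  qed simp
  finally have "(\<Sum>b<q. g (2*b+1) / (pi\<^sup>2 * (real q)\<^sup>2) * P (z b)) = 1/(2*(real q)\<^sup>2) * (\<Sum>b<q. g (2*b+1) / (sin (pi * z b))\<^sup>2)"
    by simp
  with hs show ?thesis unfolding h_def z_def by simp
qed

lemma oddsq_aux1: fixes h :: "nat \<Rightarrow> real"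
  assumes hs: "h sums (pi\<^sup>2/6)" and grp: "\<And>n. sum h {n*2..<n*2+2} = h (2*n) + h (2*n+1)"
  shows "(\<lambda>m. h (2*m) + h (2*m+1)) sums (pi\<^sup>2/6)"
  using sums_group[OF hs, of 2] unfolding grp by simp

lemma oddsq_aux2: fixes h :: "nat \<Rightarrow> real"
  assumes hs: "h sums (pi\<^sup>2/6)" and h4: "\<And>m. 1/4 * h m = h (2*m+1)"
  shows "(\<lambda>m. h (2*m+1)) sums (1/4 * (pi\<^sup>2/6))"
proof -
  have "(\<lambda>m. 1/4 * h m) sums (1/4 * (pi\<^sup>2/6))" by (rule sums_mult[OF hs])
  then show ?thesis unfolding h4 .
qed

lemma oddsq_aux3: fixes h :: "nat \<Rightarrow> real"
  assumes a: "(\<lambda>m. h (2*m) + h (2*m+1)) sums (pi\<^sup>2/6)" and b: "(\<lambda>m. h (2*m+1)) sums (1/4 * (pi\<^sup>2/6))"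
  shows "(\<lambda>m. h (2*m)) sums (pi\<^sup>2/8)"
proof -
  have "(\<lambda>m. h (2*m) + h (2*m+1) - h (2*m+1)) sums (pi\<^sup>2/6 - 1/4 * (pi\<^sup>2/6))"
    by (rule sums_diff[OF a b])
  then show ?thesis by simp
qed

lemma odd_sq_sums: "(\<lambda>k. 4/pi\<^sup>2 * (1 / (2*real k+1)\<^sup>2)) sums (1/2)"
proof -
  define h where "h n = 1 / (1 + real n)\<^sup>2" for n :: nat
  have hs: "h sums (pi\<^sup>2/6)" using inverse_squares_sums unfolding h_def[abs_def] by simp
  have grp: "sum h {n*2..<n*2+2} = h (2*n) + h (2*n+1)" for n
  proof -
    have "{n*2..<n*2+2} = {2*n, 2*n+1}" by auto
    then show ?thesis by simp
  qed
  have h4: "1/4 * h m = h (2*m+1)" for m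
  proof -
    have "1 + real (2*m+1) = 2 * (1 + real m)" by simp
    then have "h (2*m+1) = 1 / (2 * (1 + real m))\<^sup>2" by (simp only: h_def)
    also have "\<dots> = 1/4 * h m" unfolding h_def power_mult_distrib by simp
    finally show ?thesis by simp
  qed
  have "(\<lambda>m. h (2*m)) sums (pi\<^sup>2/8)"
    by (rule oddsq_aux3[OF oddsq_aux1[OF hs grp] oddsq_aux2[OF hs h4]])
  then have "(\<lambda>m. 4/pi\<^sup>2 * h (2*m)) sums (4/pi\<^sup>2 * (pi\<^sup>2/8))" by (rule sums_mult)
  moreover have "(\<lambda>m. 4/pi\<^sup>2 * h (2*m)) = (\<lambda>k. 4/pi\<^sup>2 * (1 / (2*real k+1)\<^sup>2))"
  proof
    fix k
    have "1 + real (2*k) = 2*real k+1" by simp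
    then show "4/pi\<^sup>2 * h (2*k) = 4/pi\<^sup>2 * (1 / (2*real k+1)\<^sup>2)" by (simp only: h_def)
  qed
  moreover have "4/pi\<^sup>2 * (pi\<^sup>2/8) = (1/2::real)" by simp
  ultimately show ?thesis by simp
qed

lemma sin_sq_sum:
  assumes q: "q > 0"
  shows "(\<Sum>b<q. 1 / (sin (pi * ((2*real b+1)/(2*real q))))\<^sup>2) = (real q)\<^sup>2"
proof -
  have "(\<lambda>k. 4/pi\<^sup>2 * ((\<lambda>_. 1::real) (2*k+1) / (2*real k+1)\<^sup>2)) sums
     (1/(2*(real q)\<^sup>2) * (\<Sum>b<q. (\<lambda>_. 1::real) (2*b+1) / (sin (pi * ((2*real b+1)/(2*real q))))\<^sup>2))"
    by (rule main_sum[OF q]) auto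
  then have "(\<lambda>k. 4/pi\<^sup>2 * (1 / (2*real k+1)\<^sup>2)) sums
     (1/(2*(real q)\<^sup>2) * (\<Sum>b<q. 1 / (sin (pi * ((2*real b+1)/(2*real q))))\<^sup>2))" by simp
  from sums_unique2[OF this odd_sq_sums] q show ?thesis by (simp add: field_simps)
qed

lemma cos_nonzero:
  assumes q: "q > 0" "q mod 4 \<noteq> 2"
  shows "cos ((2*real b+1) * pi / real q) \<noteq> 0"
proof
  assume "cos ((2*real b+1) * pi / real q) = 0"
  then obtain i :: int where i: "odd i" "(2*real b+1) * pi / real q = of_int i * (pi/2)"
    by (auto simp: cos_zero_iff_int)
  then have "((2*real b+1) * 2) * pi = (of_int i * real q) * pi" using q by (simp add: field_simps)
  then have "(2*real b+1) * 2 = of_int i * real q" by simp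
  then have "(2*int b+1) * 2 = i * int q"
    by (metis (mono_tags) of_int_eq_iff of_int_mult of_int_of_nat_eq of_int_add of_int_1 of_int_numeral of_nat_mult of_nat_numeral)
  note eq = this
  show False
  proof (cases "odd q")
    case True
    then have "odd (i * int q)" using i(1) by simp
    then have "odd ((2*int b+1)*2)" using eq by simp
    then show False by simp
  next
    case False
    then have "q mod 4 = 0" using q(2) by presburger
    then obtain t where t: "q = 4*t" by auto
    then have e: "2*int b+1 = 2*(i*int t)" using eq by simp
    have "even (2*(i*int t))" by simp
    then have "even (2*int b+1)" by (simp only: e)
    then show False by simp
  qed
qed

primrec Dp :: "nat \<Rightarrow> real \<Rightarrow> real" where
  "Dp 0 x = 1"
| "Dp (Suc p) x = 2 * cos (2 * real (Suc p) * x) - Dp p x"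

lemma Dp_cos: "Dp p x * cos x = cos ((2 * real p + 1) * x)"
proof (induction p)
  case 0 then show ?case by simp
next
  case (Suc p)
  define A where "A = 2 * real (Suc p) * x"
  have e1: "cos ((2 * real (Suc p) + 1) * x) = cos (A + x)" by (simp add: A_def algebra_simps)
  have e2: "cos ((2 * real p + 1) * x) = cos (A - x)" by (simp add: A_def algebra_simps)
  have "Dp (Suc p) x * cos x = 2 * cos A * cos x - cos (A - x)"
    using Suc e2 by (simp add: A_def algebra_simps)
  also have "\<dots> = cos (A + x)" by (simp add: cos_add cos_diff)
  finally show ?case using e1 by simp
qed

lemma cos_sum_zero:
  assumes q: "q > 0" and j: "0 < j" "2 * j < q"
  shows "(\<Sum>b<q. cos (2 * real j * ((2 * real b + 1) * pi / real q))) = 0"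
proof -
  define \<phi> where "\<phi> = 4 * real j * pi / real q"
  have s: "sin (\<phi> / 2) > 0"
  proof -
    have "\<phi> / 2 = 2 * real j * pi / real q" by (simp add: \<phi>_def)
    moreover have "2 * real j * pi / real q < pi"
      using j q by (simp add: field_simps)
    moreover have "0 < 2 * real j * pi / real q" using j q by simp
    ultimately show ?thesis using sin_gt_zero by metis
  qed
  have t: "2 * sin (\<phi> / 2) * cos (2 * real j * ((2 * real b + 1) * pi / real q))
      = sin (real (Suc b) * \<phi>) - sin (real b * \<phi>)" for b
  proof -
    define A where "A = 2 * real j * ((2 * real b + 1) * pi / real q)"
    have e1: "real (Suc b) * \<phi> = A + \<phi>/2" and e2: "real b * \<phi> = A - \<phi>/2"
      using q by (simp_all add: A_def \<phi>_def field_simps)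
    have "sin (real (Suc b) * \<phi>) - sin (real b * \<phi>) = sin (A + \<phi>/2) - sin (A - \<phi>/2)"
      by (simp only: e1 e2)
    also have "\<dots> = 2 * sin (\<phi> / 2) * cos A" by (simp add: sin_add sin_diff)
    finally show ?thesis unfolding A_def by simp
  qed
  have "2 * sin (\<phi> / 2) * (\<Sum>b<q. cos (2 * real j * ((2 * real b + 1) * pi / real q)))
      = (\<Sum>b<q. sin (real (Suc b) * \<phi>) - sin (real b * \<phi>))"
    unfolding sum_distrib_left t by simp
  also have "\<dots> = sin (real q * \<phi>)"
    using sum_lessThan_telescope[of "\<lambda>i. sin (real i * \<phi>)" q] by simp
  also have "real q * \<phi> = real (4 * j) * pi" using q by (simp add: \<phi>_def)
  also have "sin (real (4 * j) * pi) = 0" by (rule sin_npi)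
  finally show ?thesis using s by simp
qed

lemma Dp_sum:
  assumes q: "q = 2 * p + 1" and pp: "p' \<le> p"
  shows "(\<Sum>b<q. Dp p' ((2 * real b + 1) * pi / real q)) = (-1)^p' * real q"
  using pp
proof (induction p')
  case 0 then show ?case by simp
next
  case (Suc p')
  have "(\<Sum>b<q. Dp (Suc p') ((2 * real b + 1) * pi / real q))
     = 2 * (\<Sum>b<q. cos (2 * real (Suc p') * ((2 * real b + 1) * pi / real q)))
       - (\<Sum>b<q. Dp p' ((2 * real b + 1) * pi / real q))"
    by (simp add: sum_subtractf sum_distrib_left)
  also have "(\<Sum>b<q. cos (2 * real (Suc p') * ((2 * real b + 1) * pi / real q))) = 0"
    by (rule cos_sum_zero) (use q Suc.prems in auto)
  finally show ?case using Suc by simp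
qed

lemma T_odd:
  assumes q: "q = 2 * p + 1"
  shows "(\<Sum>b<q. sec ((2 * real b + 1) * pi / real q)) = - ((-1)^p * real q)"
proof -
  have "sec ((2 * real b + 1) * pi / real q) = - Dp p ((2 * real b + 1) * pi / real q)" for b
  proof -
    let ?x = "(2 * real b + 1) * pi / real q"
    have nz: "2 * real p + 1 > 0" by simp
    have rq: "real q = 2 * real p + 1" using q by simp
    have m: "(2 * real p + 1) * ?x = real (2*b+1) * pi" unfolding rq using nz by (simp add: field_simps)
    have "Dp p ?x * cos ?x = cos ((2 * real p + 1) * ?x)" by (rule Dp_cos)
    also have "\<dots> = cos (real (2*b+1) * pi)" by (simp only: m)
    also have "\<dots> = -1" by (simp only: cos_npi) simp
    finally have eq: "Dp p ?x * cos ?x = -1" .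
    then have c: "cos ?x \<noteq> 0" by auto
    have "- Dp p ?x = - (Dp p ?x * cos ?x) / cos ?x" using c by simp
    also have "\<dots> = 1 / cos ?x" by (simp only: eq)
    finally show ?thesis unfolding sec_def by simp
  qed
  then have "(\<Sum>b<q. sec ((2 * real b + 1) * pi / real q)) = - (\<Sum>b<q. Dp p ((2 * real b + 1) * pi / real q))"
    by (simp add: sum_negf)
  also have "\<dots> = - ((-1)^p * real q)" using Dp_sum[OF q, of p] by simp
  finally show ?thesis .
qed

lemma T_four:
  assumes q: "q = 4 * s"
  shows "(\<Sum>b<q. sec ((2 * real b + 1) * pi / real q)) = 0"
proof -
  define sg :: "nat \<Rightarrow> nat" where "sg = (\<lambda>b. if b < 2 * s then 2 * s - 1 - b else 6 * s - 1 - b)"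
  define x where "x b = (2 * real b + 1) * pi / real q" for b
  have inv: "sg (sg b) = b" if "b < q" for b using that q by (auto simp: sg_def)
  have rng: "sg b < q" if "b < q" for b using that q by (auto simp: sg_def)
  have neg: "sec (x (sg b)) = - sec (x b)" if b: "b < q" for b
  proof (cases "b < 2* s")
    case True
    then have "x (sg b) = pi - x b" using q by (simp add: sg_def x_def of_nat_diff field_simps)
    then show ?thesis by (simp add: sec_def)
  next
    case False
    then have e: "x (sg b) = (pi - x b) + 2 * pi" using q b by (simp add: sg_def x_def of_nat_diff field_simps)
    have "cos (x (sg b)) = cos ((pi - x b) + 2 * pi)" by (simp only: e)
    also have "\<dots> = cos (pi - x b)" by (rule cos_periodic)
    also have "\<dots> = - cos (x b)" by simp
    finally show ?thesis by (simp add: sec_def)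
  qed
  have "(\<Sum>b<q. - sec (x b)) = (\<Sum>b<q. sec (x b))"
    by (rule sum.reindex_bij_witness[where i=sg and j=sg]) (use inv rng neg in auto)
  then have "(\<Sum>b<q. sec (x b)) = 0" by (simp add: sum_negf)
  then show ?thesis by (simp add: x_def)
qed

lemma cos_add_2pi_nat: "cos (y + 2 * pi * real m) = cos y"
proof (induction m)
  case 0 then show ?case by simp
next
  case (Suc m)
  have "y + 2 * pi * real (Suc m) = (y + 2 * pi * real m) + 2 * pi" by (simp add: algebra_simps)
  then show ?case using Suc by (simp only: cos_periodic)
qed

lemma f_sums:
  assumes q: "q > 0" "q mod 4 \<noteq> 2"
  shows "f_term (1 / real q) sums (1/2 + (\<Sum>b<q. sec ((2 * real b + 1) * pi / real q)) / (real q)\<^sup>2)"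
proof -
  define g where "g n = sec (real n * pi / real q)" for n :: nat
  have per: "g (2*q*m + a) = g a" for m a
  proof -
    have "real (2*q*m + a) * pi / real q = real a * pi / real q + 2 * pi * real m"
      using q by (simp add: field_simps)
    then show ?thesis unfolding g_def sec_def by (simp only: cos_add_2pi_nat)
  qed
  have sym: "g (2*q - (2*b+1)) = g (2*b+1)" if b: "b < q" for b
  proof -
    have "real (2*q - (2*b+1)) * pi / real q = 2 * pi - real (2*b+1) * pi / real q"
      using q b by (simp add: of_nat_diff field_simps)
    then show ?thesis unfolding g_def sec_def by simp
  qed
  note ms = main_sum[OF q(1) per sym]
  have fe: "f_term (1 / real q) = (\<lambda>k. 4/pi\<^sup>2 * (g (2*k+1) / (2*real k+1)\<^sup>2))"
  proof (rule ext)
    fix k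
    have a: "(2 * real k + 1) * pi * (1 / real q) = real (2*k+1) * pi / real q" by simp
    show "f_term (1 / real q) k = 4/pi\<^sup>2 * (g (2*k+1) / (2*real k+1)\<^sup>2)"
      by (simp only: f_term_def g_def a)
  qed
  have tm: "g (2*b+1) / (sin (pi * ((2*real b+1)/(2*real q))))\<^sup>2
      = 2 * sec ((2 * real b + 1) * pi / real q) + 1 / (sin (pi * ((2*real b+1)/(2*real q))))\<^sup>2"
    if b: "b < q" for b
  proof -
    define y where "y = pi * ((2*real b+1)/(2*real q))"
    have x: "(2 * real b + 1) * pi / real q = 2 * y" by (simp add: y_def)
    have cst: "real (2*b+1) = 2*real b + 1" by simp
    have gb: "g (2*b+1) = sec (2 * y)" unfolding g_def cst x by (rule refl)
    have c: "cos (2 * y) \<noteq> 0" using cos_nonzero[OF q, of b] x by simp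
    have z0: "0 < (2*real b+1)/(2*real q)" using q by simp
    have z1: "(2*real b+1)/(2*real q) < 1" using b q by (simp add: field_simps)
    have "pi * ((2*real b+1)/(2*real q)) < pi * 1" by (rule mult_strict_left_mono[OF z1]) simp
    then have y1: "y < pi" by (simp add: y_def)
    have y0: "0 < y" unfolding y_def using z0 by (rule mult_pos_pos[OF pi_gt_zero])
    have sy: "sin y > 0" using y0 y1 by (rule sin_gt_zero)
    have cd: "cos (2 * y) = 1 - 2 * (sin y)\<^sup>2" by (rule cos_double_sin)
    show ?thesis unfolding gb x y_def[symmetric] sec_def using c sy cd
      by (simp add: field_simps)
  qed
  have "(\<Sum>b<q. g (2*b+1) / (sin (pi * ((2*real b+1)/(2*real q))))\<^sup>2)
      = 2 * (\<Sum>b<q. sec ((2 * real b + 1) * pi / real q)) + (real q)\<^sup>2"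
  proof -
    have "(\<Sum>b<q. g (2*b+1) / (sin (pi * ((2*real b+1)/(2*real q))))\<^sup>2)
        = (\<Sum>b<q. 2 * sec ((2 * real b + 1) * pi / real q) + 1 / (sin (pi * ((2*real b+1)/(2*real q))))\<^sup>2)"
      by (rule sum.cong[OF refl]) (rule tm, simp)
    also have "\<dots> = 2 * (\<Sum>b<q. sec ((2 * real b + 1) * pi / real q)) + (\<Sum>b<q. 1 / (sin (pi * ((2*real b+1)/(2*real q))))\<^sup>2)"
      by (simp only: sum.distrib sum_distrib_left)
    also have "\<dots> = 2 * (\<Sum>b<q. sec ((2 * real b + 1) * pi / real q)) + (real q)\<^sup>2"
      by (simp only: sin_sq_sum[OF q(1)])
    finally show ?thesis .
  qed
  with ms fe have "f_term (1 / real q) sums (1/(2*(real q)\<^sup>2) * (2 * (\<Sum>b<q. sec ((2 * real b + 1) * pi / real q)) + (real q)\<^sup>2))"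
    by simp
  moreover have "1/(2*(real q)\<^sup>2) * (2 * (\<Sum>b<q. sec ((2 * real b + 1) * pi / real q)) + (real q)\<^sup>2)
     = 1/2 + (\<Sum>b<q. sec ((2 * real b + 1) * pi / real q)) / (real q)\<^sup>2"
    using q by (simp add: field_simps)
  ultimately show ?thesis by simp
qed

theorem theorem3p1:
  fixes q :: nat
  assumes "q > 0"
  shows "(q mod 4 = 0 \<longrightarrow> f_term (1 / real q) sums (1/2))
       \<and> (q mod 4 = 1 \<longrightarrow> f_term (1 / real q) sums (1/2 - 1 / real q))
       \<and> (q mod 4 = 2 \<longrightarrow> f_singular (1 / real q))
       \<and> (q mod 4 = 3 \<longrightarrow> f_term (1 / real q) sums (1/2 + 1 / real q))"
proof (intro conjI impI)
  assume m: "q mod 4 = 0"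
  then obtain s where s: "q = 4 * s" by auto
  from f_sums[OF assms] m T_four[OF s] show "f_term (1 / real q) sums (1/2)" by simp
next
  assume m: "q mod 4 = 1"
  define r where "r = q div 4"
  have r: "q = 2 * (2 * r) + 1" unfolding r_def using m by presburger
  from f_sums[OF assms] m T_odd[OF r] have "f_term (1 / real q) sums (1/2 + - real q / (real q)\<^sup>2)"
    by simp
  moreover have "1/2 + - real q / (real q)\<^sup>2 = 1/2 - 1 / real q" using assms by (simp add: power2_eq_square)
  ultimately show "f_term (1 / real q) sums (1/2 - 1 / real q)" by simp
next
  assume m: "q mod 4 = 3"
  define r where "r = q div 4"
  have r: "q = 2 * (2 * r + 1) + 1" unfolding r_def using m by presburger
  from f_sums[OF assms] m T_odd[OF r] have "f_term (1 / real q) sums (1/2 + real q / (real q)\<^sup>2)"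
    by simp
  moreover have "1/2 + real q / (real q)\<^sup>2 = 1/2 + 1 / real q" using assms by (simp add: power2_eq_square)
  ultimately show "f_term (1 / real q) sums (1/2 + 1 / real q)" by simp
next
  assume m: "q mod 4 = 2"
  define r where "r = q div 4"
  have r: "q = 2 * (2 * r + 1)" unfolding r_def using m by presburger
  have e: "(2 * real r + 1) * pi * (1 / real q) = pi / 2" using r by (simp add: field_simps)
  have "cos ((2 * real r + 1) * pi * (1 / real q)) = cos (pi / 2)" by (simp only: e)
  then have "cos ((2 * real r + 1) * pi * (1 / real q)) = 0" by simp
  then show "f_singular (1 / real q)" unfolding f_singular_def by blast
qed

end
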